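(* Suppose $|2|_D=1$. Then for every $\gamma\in D$, writing $\gamma=\gamma_++\gamma_-$ with $\gamma_\pm\in D^\pm$, we have $|\gamma|_D=\max\{|\gamma_+|_D,|\gamma_-|_D\}$.
   Context: $F$ is a non-archimedean local field, $D$ the quaternion division algebra over $F$, $|x|_D=|\mathrm{Nrd}(x)|_F$. $K\subset D$ is a quadratic extension of $F$ with conjugation $\overline{\cdot}$, and $\mu\in K\setminus F$. $D^+=K=\{\gamma:\gamma\mu=\mu\gamma\}$ and $D^-=\{\gamma\in D:\gamma\mu=\overline\mu\gamma\}$; $D=D^+\oplus D^-$. *)

theory Defs
  imports Complex_Main
begin

text \<open>We work inside a division ring D (the type 'd). The base field F is the
centre of D, equipped with an absolute value v (only its values on F matter).\<close>

definition center :: "'d::division_ring set" where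
  "center = {z. \<forall>y. z * y = y * z}"

definition has_dim_over :: "'d::division_ring set \<Rightarrow> 'd set \<Rightarrow> nat \<Rightarrow> bool" where
  "has_dim_over F V n \<longleftrightarrow> (\<exists>e::nat \<Rightarrow> 'd.
      (\<forall>i<n. e i \<in> V) \<and>
      V = {(\<Sum>i<n. c i * e i) | c. \<forall>i<n. c i \<in> F} \<and>
      (\<forall>c. (\<forall>i<n. c i \<in> F) \<and> (\<Sum>i<n. c i * e i) = 0 \<longrightarrow> (\<forall>i<n. c i = 0)))"

definition integers :: "'d::division_ring set \<Rightarrow> ('d \<Rightarrow> real) \<Rightarrow> 'd set" where
  "integers F v = {x \<in> F. v x \<le> 1}"

definition residue_rel :: "'d::division_ring set \<Rightarrow> ('d \<Rightarrow> real) \<Rightarrow> ('d \<times> 'd) set" where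
  "residue_rel F v = {(x, y). x \<in> integers F v \<and> y \<in> integers F v \<and> v (x - y) < 1}"

definition residue_field :: "'d::division_ring set \<Rightarrow> ('d \<Rightarrow> real) \<Rightarrow> 'd set set" where
  "residue_field F v = integers F v // residue_rel F v"

definition nonarch_local_field :: "'d::division_ring set \<Rightarrow> ('d \<Rightarrow> real) \<Rightarrow> bool" where
  "nonarch_local_field F v \<longleftrightarrow>
     0 \<in> F \<and> 1 \<in> F \<and>
     (\<forall>x\<in>F. \<forall>y\<in>F. x + y \<in> F \<and> x * y \<in> F \<and> x * y = y * x) \<and>
     (\<forall>x\<in>F. - x \<in> F \<and> inverse x \<in> F) \<and>
     (\<forall>x\<in>F. 0 \<le> v x \<and> (v x = 0 \<longleftrightarrow> x = 0)) \<and>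
     (\<forall>x\<in>F. \<forall>y\<in>F. v (x * y) = v x * v y \<and> v (x + y) \<le> max (v x) (v y)) \<and>
     finite (residue_field F v) \<and>
     (\<exists>\<pi>\<in>F. v \<pi> = 1 / real (card (residue_field F v)) \<and>
        (\<forall>x\<in>F. x \<noteq> 0 \<longrightarrow> (\<exists>k::int. v x = v \<pi> powi k))) \<and>
     (\<forall>s::nat \<Rightarrow> 'd. (\<forall>n. s n \<in> F) \<and>
        (\<forall>e>0. \<exists>N. \<forall>m\<ge>N. \<forall>n\<ge>N. v (s m - s n) < e) \<longrightarrow>
        (\<exists>l\<in>F. \<forall>e>0. \<exists>N. \<forall>n\<ge>N. v (s n - l) < e))"

text \<open>Reduced trace and reduced norm of the quaternion algebra D over its centre:
every x satisfies its reduced characteristic polynomial X^2 - Trd(x) X + Nrd(x);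
for x in the centre it is (X - x)^2, otherwise it is the minimal polynomial of x.\<close>
definition nrd :: "'d::division_ring \<Rightarrow> 'd" where
  "nrd x = (if x \<in> center then x * x
            else (THE n. n \<in> center \<and> (\<exists>t\<in>center. x * x - t * x + n = 0)))"

definition trd :: "'d::division_ring \<Rightarrow> 'd" where
  "trd x = (if x \<in> center then x + x
            else (THE t. t \<in> center \<and> (\<exists>n\<in>center. x * x - t * x + n = 0)))"

definition qconj :: "'d::division_ring \<Rightarrow> 'd" where
  "qconj x = trd x - x"

definition absD :: "('d::division_ring \<Rightarrow> real) \<Rightarrow> 'd \<Rightarrow> real" where
  "absD v x = v (nrd x)"

definition Dplus :: "'d::division_ring \<Rightarrow> 'd set" where
  "Dplus \<mu> = {g. g * \<mu> = \<mu> * g}"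

definition Dminus :: "'d::division_ring \<Rightarrow> 'd set" where
  "Dminus \<mu> = {g. g * \<mu> = qconj \<mu> * g}"

end

theory Submission
  imports Defs
begin

lemma center_comm: "z \<in> center \<Longrightarrow> z * y = y * z"
  by (simp add: center_def)
lemma center_comm': "z \<in> center \<Longrightarrow> y * z = z * y"
  by (simp add: center_def)
lemma center_0[simp]: "0 \<in> center" by (simp add: center_def)
lemma center_1[simp]: "1 \<in> center" by (simp add: center_def)
lemma center_add[simp]: "a \<in> center \<Longrightarrow> b \<in> center \<Longrightarrow> a + b \<in> center"
  by (simp add: center_def distrib_left distrib_right)
lemma center_mult[simp]: "a \<in> center \<Longrightarrow> b \<in> center \<Longrightarrow> a * b \<in> center"
proof -
  assume "a \<in> center" "b \<in> center"
  then have "\<And>y. a * y = y * a" "\<And>y. b * y = y * b" by (auto simp: center_def)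
  then have "\<And>y. a * b * y = y * (a * b)" by (metis mult.assoc)
  then show ?thesis by (simp add: center_def)
qed
lemma center_uminus[simp]: "a \<in> center \<Longrightarrow> - a \<in> center"
  by (simp add: center_def)
lemma center_diff[simp]: "a \<in> center \<Longrightarrow> b \<in> center \<Longrightarrow> a - b \<in> center"
  by (simp add: center_def left_diff_distrib right_diff_distrib)
lemma center_numeral[simp]: "(numeral k :: 'd::division_ring) \<in> center"
proof -
  have "\<And>y. numeral k * y = y * (numeral k :: 'd)"
    subgoal for y using mult_of_nat_commute[of "numeral k" y] by simp done
  then show ?thesis by (simp add: center_def)
qed
lemma center_inverse[simp]:
  fixes a :: "'d::division_ring"
  assumes "a \<in> center" shows "inverse a \<in> center"
proof (cases "a = 0")
  case True then show ?thesis by simp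
next
  case False
  show ?thesis unfolding center_def
  proof (safe)
    fix y
    have "inverse a * y = inverse a * (y * a) * inverse a"
      using False by (simp add: mult.assoc)
    also have "\<dots> = inverse a * (a * y) * inverse a" using assms by (simp add: center_def)
    also have "\<dots> = y * inverse a" using False by (simp add: mult.assoc[symmetric])
    finally show "inverse a * y = y * inverse a" .
  qed
qed

lemma center_sum[simp]: "(\<And>i. i \<in> A \<Longrightarrow> f i \<in> center) \<Longrightarrow> sum f A \<in> center"
  by (induction A rule: infinite_finite_induct) auto

lemma dep_lemma:
  fixes e :: "nat \<Rightarrow> 'd::division_ring"
  shows "finite I \<Longrightarrow> card I > n \<Longrightarrow>
    (\<forall>i\<in>I. \<exists>a. (\<forall>k<n. a k \<in> center) \<and> x i = (\<Sum>k<n. a k * e k)) \<Longrightarrow>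
    \<exists>c. (\<forall>i\<in>I. c i \<in> center) \<and> (\<exists>i\<in>I. c i \<noteq> 0) \<and> (\<Sum>i\<in>I. c i * x i) = 0"
proof (induction n arbitrary: I x)
  case 0
  then obtain i0 where i0: "i0 \<in> I" by fastforce
  have x0: "\<forall>i\<in>I. x i = 0" using 0 by simp
  show ?case
    by (rule exI[of _ "\<lambda>i. if i = i0 then 1 else 0"]) (use i0 x0 in auto)
next
  case (Suc n)
  from Suc.prems(3) obtain a where a: "\<forall>i\<in>I. (\<forall>k<Suc n. a i k \<in> center) \<and> x i = (\<Sum>k<Suc n. a i k * e k)"
    by metis
  show ?case
  proof (cases "\<forall>i\<in>I. a i n = 0")
    case True
    have "\<forall>i\<in>I. \<exists>b. (\<forall>k<n. b k \<in> center) \<and> x i = (\<Sum>k<n. b k * e k)"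
      using a True by (intro ballI exI[of _ "a _"]) auto
    from Suc.IH[OF Suc.prems(1) _ this] Suc.prems(2) show ?thesis by simp
  next
    case False
    then obtain i0 where i0: "i0 \<in> I" "a i0 n \<noteq> 0" by blast
    define I' where "I' = I - {i0}"
    define r where "r i = a i n * inverse (a i0 n)" for i
    define y where "y i = x i - r i * x i0" for i
    have rc: "r i \<in> center" if "i \<in> I" for i using a that i0 by (simp add: r_def)
    have finI': "finite I'" using Suc.prems(1) by (simp add: I'_def)
    have cardI': "card I' > n" using Suc.prems(2) i0 Suc.prems(1) by (simp add: I'_def)
    have "\<forall>i\<in>I'. \<exists>b. (\<forall>k<n. b k \<in> center) \<and> y i = (\<Sum>k<n. b k * e k)"
    proof
      fix i assume i: "i \<in> I'"
      then have iI: "i \<in> I" by (simp add: I'_def)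
      have "y i = (\<Sum>k<Suc n. a i k * e k) - r i * (\<Sum>k<Suc n. a i0 k * e k)"
        using a iI i0 by (simp add: y_def)
      also have "\<dots> = (\<Sum>k<Suc n. (a i k - r i * a i0 k) * e k)"
        unfolding sum_distrib_left sum_subtractf[symmetric] by (simp add: left_diff_distrib mult.assoc)
      also have "\<dots> = (\<Sum>k<n. (a i k - r i * a i0 k) * e k)"
        using i0 by (simp add: r_def mult.assoc)
      finally show "\<exists>b. (\<forall>k<n. b k \<in> center) \<and> y i = (\<Sum>k<n. b k * e k)"
        using a iI i0 rc[OF iI] by (intro exI[of _ "\<lambda>k. a i k - r i * a i0 k"]) auto
    qed
    from Suc.IH[OF finI' cardI' this] obtain c where
      c: "\<forall>i\<in>I'. c i \<in> center" "\<exists>i\<in>I'. c i \<noteq> 0" "(\<Sum>i\<in>I'. c i * y i) = 0" by blast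
    define c' where "c' i = (if i = i0 then - (\<Sum>i\<in>I'. c i * r i) else c i)" for i
    have "(\<Sum>i\<in>I. c' i * x i) = c' i0 * x i0 + (\<Sum>i\<in>I'. c' i * x i)"
      using Suc.prems(1) i0 by (simp add: I'_def sum.remove)
    also have "(\<Sum>i\<in>I'. c' i * x i) = (\<Sum>i\<in>I'. c i * x i)"
      by (rule sum.cong) (auto simp: c'_def I'_def)
    also have "\<dots> = (\<Sum>i\<in>I'. c i * y i) + (\<Sum>i\<in>I'. c i * r i) * x i0"
      by (simp add: y_def sum_distrib_right right_diff_distrib mult.assoc sum.distrib[symmetric])
    finally have "(\<Sum>i\<in>I. c' i * x i) = 0" using c(3) by (simp add: c'_def)
    moreover have "\<forall>i\<in>I. c' i \<in> center"
    proof
      fix i assume "i \<in> I"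
      have "(\<Sum>i\<in>I'. c i * r i) \<in> center"
        using c(1) rc by (intro center_sum center_mult) (auto simp: I'_def)
      then show "c' i \<in> center" using c(1) \<open>i \<in> I\<close> by (auto simp: c'_def I'_def)
    qed
    moreover have "\<exists>i\<in>I. c' i \<noteq> 0" using c(2) by (auto simp: c'_def I'_def)
    ultimately show ?thesis by blast
  qed
qed



lemma cc: "a \<in> center \<Longrightarrow> b \<in> center \<Longrightarrow> a * b = b * a" by (simp add: center_comm)
lemma clc: "a \<in> center \<Longrightarrow> b \<in> center \<Longrightarrow> a * (b * q) = b * (a * q)"
  by (metis center_comm mult.assoc)

locale qs =
  fixes mu t n :: "'d::division_ring"
  assumes t_c[simp]: "t \<in> center" and n_c[simp]: "n \<in> center"
    and mu_nc: "mu \<notin> center" and mu2: "mu * mu = t * mu - n"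
    and two_nz: "(2::'d) \<noteq> 0"
begin

lemma mu_cl: "z \<in> center \<Longrightarrow> mu * z = z * mu" by (simp add: center_comm)
lemma mu_cl2: "z \<in> center \<Longrightarrow> mu * (z * q) = z * (mu * q)" by (metis center_comm mult.assoc)
lemma mu_mu2: "mu * (mu * q) = t * (mu * q) - n * q"
  by (simp add: mult.assoc[symmetric] mu2 left_diff_distrib)

lemmas R = mu_cl mu_cl2 mu_mu2 mu2 distrib_left distrib_right left_diff_distrib right_diff_distrib mult.assoc

lemma indep: "x \<in> center \<Longrightarrow> y \<in> center \<Longrightarrow> x + y * mu = 0 \<Longrightarrow> x = 0 \<and> y = 0"
proof -
  assume xy: "x \<in> center" "y \<in> center" "x + y * mu = 0"
  show ?thesis
  proof (cases "y = 0")
    case True then show ?thesis using xy by simp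
  next
    case False
    have "mu = - (inverse y * x)" using xy(3) False
      by (metis add_eq_0_iff left_inverse mult.assoc mult_1 mult_minus_right)
    then have "mu \<in> center" using xy by simp
    then show ?thesis using mu_nc by blast
  qed
qed

definition "mb = t - mu"
lemma mu_mb: "mu * mb = n" by (simp add: mb_def R)
lemma mb_mu: "mb * mu = n" by (simp add: mb_def R)
lemma mb_ne: "mb - mu \<noteq> 0"
proof
  assume "mb - mu = 0"
  then have "t = 2 * mu" by (simp add: mb_def algebra_simps mult_2)
  then have "inverse 2 * t = (inverse 2 * 2) * mu" by (simp add: mult.assoc)
  then have "inverse 2 * t = mu" using two_nz by (metis left_inverse mult_1)
  then have "mu \<in> center" by (metis t_c center_mult center_inverse center_numeral)
  then show False using mu_nc by blast
qed

definition "Lf x y = x + y * mu"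
definition "Nm x y = x * x + x * y * t + y * y * n"

lemma Nm_c[simp]: "x \<in> center \<Longrightarrow> y \<in> center \<Longrightarrow> Nm x y \<in> center" by (simp add: Nm_def)

lemma Lf_mult: "x \<in> center \<Longrightarrow> y \<in> center \<Longrightarrow> z \<in> center \<Longrightarrow> w \<in> center \<Longrightarrow>
   Lf x y * Lf z w = Lf (x*z - y*w*n) (x*w + y*z + y*w*t)"
  by (simp add: Lf_def R clc cc algebra_simps)


lemma Lf_c[simp]: "x \<in> center \<Longrightarrow> y \<in> center \<Longrightarrow> Lf x y \<in> center \<longleftrightarrow> y = 0"
proof
  assume c: "x \<in> center" "y \<in> center" "Lf x y \<in> center"
  have "(- Lf x y + x) + y * mu = 0" by (simp add: Lf_def)
  have "- Lf x y + x \<in> center" using c by simp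
  from indep[OF this c(2)] \<open>(- Lf x y + x) + y * mu = 0\<close> show "y = 0" by blast
qed (simp add: Lf_def)

definition "Lc x y = x + y * mb"
lemma Lc_Lf: "Lc x y = Lf (x + y * t) (- y)" by (simp add: Lc_def Lf_def mb_def algebra_simps)

lemma Lf_comm: "x \<in> center \<Longrightarrow> y \<in> center \<Longrightarrow> z \<in> center \<Longrightarrow> w \<in> center \<Longrightarrow>
   Lf x y * Lf z w = Lf z w * Lf x y"
  by (simp add: Lf_mult cc clc algebra_simps)

lemma mu_Lf: "x \<in> center \<Longrightarrow> y \<in> center \<Longrightarrow> mu * Lf x y = Lf x y * mu"
  using Lf_comm[of 0 1 x y] by (simp add: Lf_def)

lemma Lf_Lc: "x \<in> center \<Longrightarrow> y \<in> center \<Longrightarrow> Lf x y * Lc x y = Nm x y"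
  by (simp add: Lc_Lf Lf_mult Nm_def) (simp add: Lf_def cc clc algebra_simps)
lemma Lc_Lf': "x \<in> center \<Longrightarrow> y \<in> center \<Longrightarrow> Lc x y * Lf x y = Nm x y"
  by (simp add: Lc_Lf Lf_mult Nm_def) (simp add: Lf_def cc clc algebra_simps)

lemma Lf_zero: "x \<in> center \<Longrightarrow> y \<in> center \<Longrightarrow> Lf x y = 0 \<longleftrightarrow> x = 0 \<and> y = 0"
  using indep by (auto simp: Lf_def)

lemma Nm_zero: "x \<in> center \<Longrightarrow> y \<in> center \<Longrightarrow> Nm x y = 0 \<longleftrightarrow> x = 0 \<and> y = 0"
proof
  assume c: "x \<in> center" "y \<in> center" "Nm x y = 0"
  then have "Lf x y = 0 \<or> Lc x y = 0" using Lf_Lc by fastforce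
  then show "x = 0 \<and> y = 0" using c Lf_zero[of x y] Lf_zero[of "x + y * t" "- y"] by (auto simp: Lc_Lf)
qed (simp add: Nm_def)

lemma Lf_inv: assumes c: "x \<in> center" "y \<in> center" "Lf x y \<noteq> 0"
  shows "\<exists>p q. p \<in> center \<and> q \<in> center \<and> inverse (Lf x y) = Lf p q"
proof -
  have N: "Nm x y \<noteq> 0" using c(3) by (simp add: Nm_zero[OF c(1) c(2)] Lf_zero[OF c(1) c(2)])
  have "Lf x y * (Lc x y * inverse (Nm x y)) = (Lf x y * Lc x y) * inverse (Nm x y)"
    by (rule mult.assoc[symmetric])
  also have "\<dots> = 1" using N by (simp add: Lf_Lc[OF c(1) c(2)])
  finally have "inverse (Lf x y) = Lc x y * inverse (Nm x y)"
    by (rule inverse_unique)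
  also have "\<dots> = Lf ((x + y * t) * inverse (Nm x y)) (- y * inverse (Nm x y))"
    using c by (simp add: Lc_Lf Lf_def distrib_right left_diff_distrib mult.assoc mu_cl)
  finally show ?thesis using c by (intro exI conjI) auto
qed

end



locale qsj = qs mu t n for mu t n :: "'d::division_ring" +
  fixes j c :: "'d::division_ring"
  assumes j_nz: "j \<noteq> 0" and j_mu: "j * mu = mb * j" and jj: "j * j = c" and c_c[simp]: "c \<in> center"
begin

lemma j_cl: "z \<in> center \<Longrightarrow> j * z = z * j" by (simp add: center_comm)
lemma j_mb: "j * mb = mu * j"
  by (simp add: mb_def right_diff_distrib j_mu j_cl left_diff_distrib)

lemma j_Lf: "x \<in> center \<Longrightarrow> y \<in> center \<Longrightarrow> j * Lf x y = Lc x y * j"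
  by (simp add: Lf_def Lc_def distrib_left distrib_right j_cl mult.assoc[symmetric] j_mu)
    (simp add: mult.assoc j_mu j_mb)
lemma j_Lc: "x \<in> center \<Longrightarrow> y \<in> center \<Longrightarrow> j * Lc x y = Lf x y * j"
  by (simp add: Lf_def Lc_def distrib_left distrib_right j_cl mult.assoc[symmetric] j_mb)
    (simp add: mult.assoc j_mu j_mb)

lemma anti: assumes c: "z \<in> center" "w \<in> center" and h: "Lf z w * j * mu = mu * (Lf z w * j)"
  shows "z = 0 \<and> w = 0"
proof -
  have "Lf z w * j * mu = Lf z w * mb * j" by (simp add: mult.assoc j_mu)
  moreover have "mu * (Lf z w * j) = Lf z w * mu * j" using c by (simp add: mult.assoc[symmetric] mu_Lf)
  ultimately have e1: "Lf z w * mb * j = Lf z w * mu * j" using h by metis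
  have "Lf z w * (mb - mu) * j = 0" by (simp only: right_diff_distrib left_diff_distrib e1) simp
  then have "Lf z w = 0" using mb_ne j_nz by simp
  then show ?thesis using c Lf_zero by blast
qed

lemma Gnorm: assumes c: "x \<in> center" "y \<in> center" "z \<in> center" "w \<in> center"
  shows "(Lc x y - Lf z w * j) * (Lf x y + Lf z w * j) = Nm x y - c * Nm z w"
proof -
  have 1: "Lc x y * (Lf z w * j) = Lf z w * (Lc x y * j)"
    using c by (simp add: mult.assoc[symmetric] Lf_comm Lc_Lf)
  have 2: "Lf z w * j * Lf x y = Lf z w * (Lc x y * j)"
    using c by (simp add: mult.assoc j_Lf)
  have 3: "Lf z w * j * (Lf z w * j) = c * Nm z w"
  proof -
    have "Lf z w * j * (Lf z w * j) = Lf z w * (Lc z w * (j * j))"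
      using c by (simp add: mult.assoc[symmetric]) (simp add: mult.assoc j_Lf)
    also have "\<dots> = Nm z w * c" using c by (simp add: jj mult.assoc[symmetric] Lf_Lc)
    finally show ?thesis using c by (simp add: cc)
  qed
  have e: "(Lc x y - Lf z w * j) * (Lf x y + Lf z w * j) =
     Lc x y * Lf x y + Lc x y * (Lf z w * j) - Lf z w * j * Lf x y - Lf z w * j * (Lf z w * j)"
    by (simp add: algebra_simps)
  show ?thesis unfolding e 1 2 3 using c by (simp add: Lc_Lf')
qed

end


lemma nrd_center: "x \<in> center \<Longrightarrow> nrd x = x * x" by (simp add: nrd_def)

lemma quad_unique:
  fixes x :: "'d::division_ring"
  assumes x: "x \<notin> center" and c: "T \<in> center" "N \<in> center" "T' \<in> center" "N' \<in> center"
    and e: "x * x - T * x + N = 0" "x * x - T' * x + N' = 0"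
  shows "T = T' \<and> N = N'"
proof -
  have h: "(T - T') * x = N - N'" using e by (simp add: algebra_simps) (metis add.commute add_diff_eq diff_add_cancel eq_diff_eq e(1))
  show ?thesis
  proof (cases "T = T'")
    case True then show ?thesis using h by simp
  next
    case False
    then have "x = inverse (T - T') * (N - N')" using h
      by (metis diff_eq_eq left_inverse mult.assoc mult_1 add_0 right_minus_eq)
    then have "x \<in> center" using c by simp
    then show ?thesis using x by blast
  qed
qed

lemma nrd_quad:
  fixes x :: "'d::division_ring"
  assumes x: "x \<notin> center" and c: "T \<in> center" "N \<in> center" and e: "x * x - T * x + N = 0"
  shows "nrd x = N" "trd x = T"
proof -
  have "(THE n. n \<in> center \<and> (\<exists>t\<in>center. x * x - t * x + n = 0)) = N"
    by (rule the_equality) (use c e quad_unique[OF x] in blast)+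
  then show "nrd x = N" using x by (simp add: nrd_def)
  have "(THE t. t \<in> center \<and> (\<exists>n\<in>center. x * x - t * x + n = 0)) = T"
    by (rule the_equality) (use c e quad_unique[OF x] in blast)+
  then show "trd x = T" using x by (simp add: trd_def)
qed

context qsj begin

lemma nrd_G: assumes c: "x \<in> center" "y \<in> center" "z \<in> center" "w \<in> center"
  shows "nrd (Lf x y + Lf z w * j) = Nm x y - c * Nm z w"
proof (cases "Lf x y + Lf z w * j \<in> center")
  case True
  then have "(Lf x y + Lf z w * j) * mu = mu * (Lf x y + Lf z w * j)" by (simp add: center_comm)
  then have "Lf z w * j * mu = mu * (Lf z w * j)" using c by (simp add: algebra_simps mu_Lf)
  then have zw: "z = 0" "w = 0" using anti c by auto
  then have "Lf x y \<in> center" using True by (simp add: Lf_def)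
  then have "y = 0" using c by simp
  then show ?thesis using zw True by (simp add: nrd_center Lf_def Nm_def)
next
  case False
  let ?G = "Lf x y + Lf z w * j" and ?Gc = "Lc x y - Lf z w * j"
  have s: "?G + ?Gc = 2 * x + y * t" by (simp add: Lf_def Lc_def mb_def algebra_simps mult_2)
  have "?G * ?G - (2 * x + y * t) * ?G + (Nm x y - c * Nm z w) = 0"
    unfolding s[symmetric] Gnorm[OF c, symmetric] by (simp add: algebra_simps)
  from nrd_quad(1)[OF False _ _ this] c show ?thesis by simp
qed

end


lemma dim_dep:
  fixes V :: "'d::division_ring set"
  assumes "has_dim_over center V m" "finite I" "card I > m" "\<forall>i\<in>I. x i \<in> V"
  shows "\<exists>c. (\<forall>i\<in>I. c i \<in> center) \<and> (\<exists>i\<in>I. c i \<noteq> 0) \<and> (\<Sum>i\<in>I. c i * x i) = 0"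
proof -
  obtain e where e: "V = {(\<Sum>i<m. c i * e i) | c. \<forall>i<m. c i \<in> center}"
    using assms(1) unfolding has_dim_over_def by blast
  have "\<forall>i\<in>I. \<exists>a. (\<forall>k<m. a k \<in> center) \<and> x i = (\<Sum>k<m. a k * e k)"
    using assms(4) e by blast
  from dep_lemma[OF assms(2,3) this] show ?thesis .
qed

lemma indep0:
  fixes mu :: "'d::division_ring"
  assumes "mu \<notin> center" "x \<in> center" "y \<in> center" "x + y * mu = 0" shows "x = 0 \<and> y = 0"
proof (cases "y = 0")
  case True then show ?thesis using assms by simp
next
  case False
  have "mu = - (inverse y * x)" using assms(4) False
    by (metis add_eq_0_iff left_inverse mult.assoc mult_1 mult_minus_right)
  then have "mu \<in> center" using assms by simp
  then show ?thesis using assms by blast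
qed

lemma mu_quad:
  fixes mu :: "'d::division_ring" and K :: "'d set"
  assumes K_sub: "center \<subseteq> K"
    and K_field: "\<forall>x\<in>K. \<forall>y\<in>K. x + y \<in> K \<and> x * y \<in> K \<and> - x \<in> K \<and> inverse x \<in> K"
    and K_quad: "has_dim_over center K 2"
    and mu: "mu \<in> K" "mu \<notin> center"
  shows "\<exists>t n. t \<in> center \<and> n \<in> center \<and> mu * mu = t * mu - n"
proof -
  define x where "x i = (if i = (0::nat) then 1 else if i = 1 then mu else mu * mu)" for i
  have "\<forall>i\<in>{0,1,2}. x i \<in> K" using K_sub K_field mu by (auto simp: x_def)
  from dim_dep[OF K_quad _ _ this] obtain c where
    c: "\<forall>i\<in>{0,1,2::nat}. c i \<in> center" "\<exists>i\<in>{0,1,2::nat}. c i \<noteq> 0"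
       "(\<Sum>i\<in>{0,1,2::nat}. c i * x i) = 0" by auto
  have s: "c 0 + c 1 * mu + c 2 * (mu * mu) = 0" using c(3) by (simp add: x_def add.assoc)
  have c2: "c 2 \<noteq> 0"
  proof
    assume "c 2 = 0"
    then have "c 0 + c 1 * mu = 0" using s by simp
    then have "c 0 = 0 \<and> c 1 = 0" using indep0[OF mu(2), of "c 0" "c 1"] c(1) by simp
    then show False using c(2) \<open>c 2 = 0\<close> by auto
  qed
  have "c 2 * (mu * mu) = - c 0 - c 1 * mu" using s by (simp add: algebra_simps eq_neg_iff_add_eq_0)
  then have "mu * mu = inverse (c 2) * (- c 0 - c 1 * mu)"
    using c2 by (metis left_inverse mult.assoc mult_1)
  also have "\<dots> = (- (inverse (c 2) * c 1)) * mu - inverse (c 2) * c 0"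
    by (simp add: algebra_simps)
  finally show ?thesis using c(1)
    by (intro exI[of _ "- (inverse (c 2) * c 1)"] exI[of _ "inverse (c 2) * c 0"] conjI) auto
qed

context qs begin

lemma j_exists: "\<exists>j. j \<noteq> 0 \<and> j * mu = mb * j"
proof -
  obtain y where y: "mu * y \<noteq> y * mu" using mu_nc unfolding center_def by blast
  have yt: "y * t = t * y" and yn: "y * n = n * y" by (simp_all add: center_comm')
  define j where "j = mu * y - y * mu"
  have "j * mu = mu * y * mu - y * (mu * mu)" by (simp add: j_def algebra_simps)
  also have "\<dots> = mu * y * mu - y * t * mu + n * y" by (simp add: mu2 algebra_simps yn)
  also have "\<dots> = (t - mu) * (mu * y - y * mu)"
    by (simp add: algebra_simps mu_mu2 yt)
  finally have "j * mu = mb * j" by (simp add: mb_def j_def)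
  moreover have "j \<noteq> 0" using y by (simp add: j_def)
  ultimately show ?thesis by blast
qed

lemma Dplus_L:
  assumes D_quat: "has_dim_over center (UNIV :: 'd set) 4"
    and j: "j \<noteq> 0" "j * mu = mb * j" and g: "g * mu = mu * g"
  shows "\<exists>x y. x \<in> center \<and> y \<in> center \<and> g = Lf x y"
proof (rule ccontr)
  assume nL: "\<not> ?thesis"
  define X where "X i = (if i = (0::nat) then 1 else if i = 1 then mu else if i = 2 then g
      else if i = 3 then mu * g else j)" for i
  obtain c where c: "\<forall>i\<in>{0,1,2,3,4::nat}. c i \<in> center" "\<exists>i\<in>{0,1,2,3,4::nat}. c i \<noteq> 0"
       "(\<Sum>i\<in>{0,1,2,3,4::nat}. c i * X i) = 0"
    using dim_dep[OF D_quat, of "{0,1,2,3,4::nat}" X] by auto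
  have cc0: "c 0 \<in> center" "c 1 \<in> center" "c 2 \<in> center" "c 3 \<in> center" "c 4 \<in> center"
    using c(1) by auto
  define P where "P = Lf (c 0) (c 1) + Lf (c 2) (c 3) * g"
  have s: "P + c 4 * j = 0" using c(3) by (simp add: X_def P_def Lf_def algebra_simps)
  have Pmu: "P * mu = mu * P" using cc0
    by (simp add: P_def distrib_right distrib_left mult.assoc g mu_Lf[symmetric])
       (simp add: mult.assoc[symmetric] mu_Lf)
  have "c 4 * j = - P" using s by (simp add: eq_neg_iff_add_eq_0 add.commute)
  then have "c 4 * j * mu = mu * (c 4 * j)" using Pmu by simp
  moreover have "c 4 * j * mu = mb * (c 4 * j)"
  proof -
    have cm: "c 4 * mb = mb * c 4" using cc0 by (simp add: center_comm)
    have "c 4 * j * mu = (c 4 * mb) * j" by (simp add: mult.assoc j(2))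
    also have "\<dots> = mb * (c 4 * j)" by (simp add: cm mult.assoc)
    finally show ?thesis .
  qed
  ultimately have "(mb - mu) * (c 4 * j) = 0" by (simp add: left_diff_distrib)
  then have c4: "c 4 = 0" using mb_ne j(1) by simp
  then have P0: "Lf (c 0) (c 1) + Lf (c 2) (c 3) * g = 0" using s by (simp add: P_def)
  show False
  proof (cases "Lf (c 2) (c 3) = 0")
    case True
    then have "c 2 = 0" "c 3 = 0" using Lf_zero cc0 by auto
    moreover have "Lf (c 0) (c 1) = 0" using True P0 by simp
    then have "c 0 = 0" "c 1 = 0" using Lf_zero[OF cc0(1,2)] by auto
    ultimately show False using c(2) c4 by auto
  next
    case False
    obtain p q where pq: "p \<in> center" "q \<in> center" "inverse (Lf (c 2) (c 3)) = Lf p q"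
      using Lf_inv[OF cc0(3,4) False] by blast
    have "Lf (c 2) (c 3) * g = - Lf (c 0) (c 1)" using P0 by (simp add: eq_neg_iff_add_eq_0 add.commute)
    then have "g = inverse (Lf (c 2) (c 3)) * (- Lf (c 0) (c 1))" using False
      by (metis left_inverse mult.assoc mult_1)
    also have "\<dots> = Lf (- (p * c 0 - q * c 1 * n)) (- (p * c 1 + q * c 0 + q * c 1 * t))"
      using pq cc0 by (simp add: Lf_mult) (simp add: Lf_def algebra_simps)
    finally have gL: "g = Lf (- (p * c 0 - q * c 1 * n)) (- (p * c 1 + q * c 0 + q * c 1 * t))" .
    have "(- (p * c 0 - q * c 1 * n)) \<in> center" "(- (p * c 1 + q * c 0 + q * c 1 * t)) \<in> center"
      using pq cc0 by simp_all
    then show False using nL gL by blast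
  qed
qed

end


locale nv =
  fixes v :: "'d::division_ring \<Rightarrow> real"
  assumes loc: "nonarch_local_field center v"
begin

lemma v_nn: "x \<in> center \<Longrightarrow> 0 \<le> v x" using loc by (simp add: nonarch_local_field_def)
lemma v_zero: "x \<in> center \<Longrightarrow> v x = 0 \<longleftrightarrow> x = 0" using loc by (simp add: nonarch_local_field_def)
lemma v_mult: "x \<in> center \<Longrightarrow> y \<in> center \<Longrightarrow> v (x * y) = v x * v y"
  using loc by (simp add: nonarch_local_field_def)
lemma v_add: "x \<in> center \<Longrightarrow> y \<in> center \<Longrightarrow> v (x + y) \<le> max (v x) (v y)"
  using loc by (simp add: nonarch_local_field_def)
lemma v_0[simp]: "v 0 = 0" using v_zero[of 0] by simp
lemma v_1[simp]: "v 1 = 1"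
proof -
  have "v 1 = v 1 * v 1" using v_mult[of 1 1] by simp
  moreover have "v 1 \<noteq> 0" using v_zero[of 1] by simp
  ultimately show ?thesis by (metis mult_cancel_right1)
qed
lemma v_m1: "v (- 1) = 1"
proof -
  have "v (-1) * v (-1) = 1" using v_mult[of "-1" "-1"] by simp
  moreover have "v (-1) \<ge> 0" using v_nn[of "-1"] by simp
  ultimately show ?thesis using power2_eq_1_iff[of "v (-1)"] by (simp add: power2_eq_square)
qed
lemma v_uminus: "x \<in> center \<Longrightarrow> v (- x) = v x"
  using v_mult[of "-1" x] v_m1 by simp
lemma v_diff: "x \<in> center \<Longrightarrow> y \<in> center \<Longrightarrow> v (x - y) \<le> max (v x) (v y)"
  using v_add[of x "- y"] v_uminus[of y] by simp
lemma v_sym: "x \<in> center \<Longrightarrow> y \<in> center \<Longrightarrow> v (x - y) = v (y - x)"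
  using v_uminus[of "y - x"] by simp
lemma v_inv: "x \<in> center \<Longrightarrow> x \<noteq> 0 \<Longrightarrow> v (inverse x) = inverse (v x)"
proof -
  assume x: "x \<in> center" "x \<noteq> 0"
  have "v (inverse x) * v x = 1" using v_mult[of "inverse x" x] x by simp
  then show ?thesis by (metis inverse_unique mult.commute)
qed

lemma complete:
  fixes s :: "nat \<Rightarrow> 'd"
  assumes "\<forall>k. s k \<in> center" "\<forall>e>0. \<exists>N. \<forall>m\<ge>N. \<forall>n\<ge>N. v (s m - s n) < e"
  shows "\<exists>l\<in>center. \<forall>e>0. \<exists>N. \<forall>n\<ge>N. v (s n - l) < e"
proof -
  from loc have H: "\<forall>s::nat \<Rightarrow> 'd. (\<forall>n. s n \<in> center) \<and>
        (\<forall>e>0. \<exists>N. \<forall>m\<ge>N. \<forall>n\<ge>N. v (s m - s n) < e) \<longrightarrow>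
        (\<exists>l\<in>center. \<forall>e>0. \<exists>N. \<forall>n\<ge>N. v (s n - l) < e)"
    unfolding nonarch_local_field_def by (elim conjE) assumption
  show ?thesis using H[rule_format, OF conjI[OF assms(1) assms(2)]] .
qed

end


context nv begin

lemma hensel:
  assumes v2: "v 2 = 1" and u: "u \<in> center" and r1: "v (u - 1) < 1"
  shows "\<exists>s\<in>center. s * s = u"
proof -
  define r where "r = v (u - 1)"
  have r0: "0 \<le> r" using v_nn u by (simp add: r_def)
  have r1': "r < 1" using r1 by (simp add: r_def)
  have rpow: "r ^ (k + 1) \<le> r" for k
    using mult_left_le[OF power_le_one[OF r0 less_imp_le[OF r1']] r0, of k] by (simp add: mult.commute)
  define h :: 'd where "h = inverse 2"
  have two: "(2::'d) \<noteq> 0" using v2 by auto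
  have hc: "h \<in> center" unfolding h_def by (rule center_inverse) simp
  have vh: "v h = 1" unfolding h_def using v_inv[of 2] v2 two by simp
  have h2: "2 * h = 1" unfolding h_def using two by (rule right_inverse)
  define w where "w = rec_nat 1 (\<lambda>_ a. a - h * (a * a - u))"
  have w0: "w 0 = 1" and wS: "\<And>k. w (Suc k) = w k - h * (w k * w k - u)" by (simp_all add: w_def)
  have inv: "w k \<in> center \<and> v (w k - 1) \<le> r \<and> v (w k * w k - u) \<le> r ^ (k + 1)" for k
  proof (induction k)
    case 0 then show ?case using r0 u v_sym[of 1 u] by (simp add: w0 r_def)
  next
    case (Suc k)
    define a where "a = w k"
    define e where "e = a * a - u"
    have ac: "a \<in> center" and ec: "e \<in> center" using Suc u by (simp_all add: a_def e_def)
    have ve: "v e \<le> r ^ (k + 1)" using Suc by (simp add: a_def e_def)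
    have va: "v (a - 1) \<le> r" using Suc by (simp add: a_def)
    have wa: "w (Suc k) = a - h * e" by (simp add: wS a_def e_def)
    have ident: "(a - h * e) * (a - h * e) - u = e * (1 - a) + h * h * (e * e)"
    proof -
      have "(a - h * e) * (a - h * e) - u = e - (2 * h) * (a * e) + h * h * (e * e)"
      proof -
        have aa: "a * a = e + u" by (simp add: e_def)
        show ?thesis using ac ec hc u by (simp add: aa algebra_simps cc clc mult_2)
      qed
      also have "\<dots> = e - a * e + h * h * (e * e)" by (simp add: h2)
      finally show ?thesis using ac ec by (simp add: algebra_simps cc)
    qed
    have vee: "v e * v e \<le> r ^ (k + 2)"
    proof -
      have "v e * v e \<le> r ^ (k + 1) * r ^ (k + 1)"
        using ve v_nn[OF ec] by (simp add: mult_mono)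
      also have "\<dots> \<le> r ^ (k + 1) * r" using r0 rpow[of k]
        by (intro mult_left_mono) auto
      finally show ?thesis by (simp add: power_Suc2 mult.commute)
    qed
    have "v (e * (1 - a)) \<le> r ^ (k + 2)"
    proof -
      have "v (e * (1 - a)) = v e * v (a - 1)" using ec ac v_mult v_sym by simp
      also have "\<dots> \<le> r ^ (k + 1) * r" using ve va v_nn[OF ec] v_nn[of "a - 1"] ac r0 by (intro mult_mono) auto
      finally show ?thesis by (simp add: power_Suc2 mult_ac)
    qed
    moreover have "v (h * h * (e * e)) \<le> r ^ (k + 2)"
      using vee hc ec vh by (simp add: v_mult)
    ultimately have A: "v (w (Suc k) * w (Suc k) - u) \<le> r ^ (Suc k + 1)"
      using v_add[of "e * (1 - a)" "h * h * (e * e)"] ac ec hc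
      by (simp add: wa ident)
    have "v (h * e) = v e" using vh hc ec by (simp add: v_mult)
    then have "v (h * e) \<le> r" using ve rpow[of k] by linarith
    then have B: "v (w (Suc k) - 1) \<le> r"
      using v_diff[of "a - 1" "h * e"] va ac ec hc by (simp add: wa algebra_simps)
    show ?case using A B ac ec hc by (simp add: wa)
  qed
  have wc: "w k \<in> center" for k using inv by blast
  have rmono: "r ^ a \<le> r ^ b" if "b \<le> a" for a b
    using power_decreasing[OF that r0] r1' by simp
  have stp: "v (w (Suc k) - w k) \<le> r ^ (k + 1)" for k
  proof -
    have "w (Suc k) - w k = - (h * (w k * w k - u))" by (simp add: wS)
    then have "v (w (Suc k) - w k) = v (w k * w k - u)"
      using hc wc[of k] u vh by (simp add: v_uminus v_mult)
    then show ?thesis using inv[of k] by simp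
  qed
  have cau: "v (w (k + m) - w k) \<le> r ^ (k + 1)" for k m
  proof (induction m)
    case 0 then show ?case using r0 by simp
  next
    case (Suc m)
    have "w (k + Suc m) - w k = (w (Suc (k + m)) - w (k + m)) + (w (k + m) - w k)" by simp
    then have "v (w (k + Suc m) - w k) \<le> max (v (w (Suc (k + m)) - w (k + m))) (v (w (k + m) - w k))"
      using v_add[of "w (Suc (k + m)) - w (k + m)" "w (k + m) - w k"] wc by simp
    moreover have "v (w (Suc (k + m)) - w (k + m)) \<le> r ^ (k + 1)"
      using stp[of "k + m"] rmono[of "k + 1" "k + m + 1"] by simp
    ultimately show ?case using Suc by simp
  qed
  have cau2: "v (w m - w n) \<le> r ^ (N + 1)" if "m \<ge> N" "n \<ge> N" for m n N
  proof (cases "n \<le> m")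
    case True
    then have "v (w m - w n) \<le> r ^ (n + 1)" using cau[of n "m - n"] by simp
    then show ?thesis using rmono[of "N + 1" "n + 1"] that by simp
  next
    case False
    then have "v (w n - w m) \<le> r ^ (m + 1)" using cau[of m "n - m"] by simp
    then show ?thesis using rmono[of "N + 1" "m + 1"] that v_sym wc by simp
  qed
  have small: "\<exists>N. \<forall>k\<ge>N. r ^ (k + 1) < e" if e0: "e > 0" for e
  proof -
    obtain N where "r ^ N < e" using real_arch_pow_inv[OF e0 r1'] by blast
    then show ?thesis using rmono by (metis le_add1 le_trans order.strict_trans1 add_le_mono1)
  qed
  have "\<forall>e>0. \<exists>N. \<forall>m\<ge>N. \<forall>n\<ge>N. v (w m - w n) < e"
  proof (intro allI impI)
    fix e :: real assume "e > 0"
    then obtain N where "\<forall>k\<ge>N. r ^ (k + 1) < e" using small by blast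
    then show "\<exists>N. \<forall>m\<ge>N. \<forall>n\<ge>N. v (w m - w n) < e"
      using cau2 by (meson order.strict_trans1 order_refl)
  qed
  from complete[OF _ this] wc obtain l where l: "l \<in> center" "\<forall>e>0. \<exists>N. \<forall>n\<ge>N. v (w n - l) < e"
    by blast
  have "l * l = u"
  proof (rule ccontr)
    assume ne: "l * l \<noteq> u"
    define d where "d = v (l * l - u)"
    have d0: "d > 0" using ne v_nn[of "l * l - u"] v_zero[of "l * l - u"] l u by (simp add: d_def)
    obtain N1 where N1: "\<forall>n\<ge>N1. v (w n - l) < min d 1" using l d0 by (meson less_numeral_extra(1) min_less_iff_conj)
    obtain N2 where N2: "\<forall>k\<ge>N2. r ^ (k + 1) < d" using small d0 by blast
    define k where "k = max N1 N2"
    define a where "a = w k"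
    have ac: "a \<in> center" using wc by (simp add: a_def)
    have va: "v (a - l) < min d 1" using N1[rule_format, of k] by (simp add: a_def k_def)
    have ve: "v (a * a - u) < d" using inv[of k] N2 by (simp add: a_def k_def) (meson max.cobounded2 order.strict_trans1)
    have id: "l * l - u = (l - a) * (l + a) + (a * a - u)"
      using ac l by (simp add: algebra_simps cc)
    have "v (a - 1) \<le> r" using inv[of k] by (simp add: a_def)
    then have "v a \<le> 1" using v_add[of "a - 1" 1] ac r1' by simp
    have vla: "v (l + a) \<le> 1"
    proof -
      have "l + a = (l - a) + 2 * a" by (simp add: algebra_simps mult_2)
      then have "v (l + a) \<le> max (v (l - a)) (v (2 * a))"
        using v_add[of "l - a" "2 * a"] ac l by (metis center_diff center_mult center_numeral)
      moreover have "v (2 * a) = v a" using v_mult[of 2 a] v2 ac by simp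
      moreover have "v (l - a) < 1" using va v_sym[of a l] ac l by simp
      ultimately show ?thesis using \<open>v a \<le> 1\<close> by simp
    qed
    have "v ((l - a) * (l + a)) < d"
    proof -
      have "v ((l - a) * (l + a)) = v (l - a) * v (l + a)" using v_mult ac l by simp
      also have "\<dots> \<le> v (l - a)" using vla v_nn[of "l - a"] ac l by (simp add: mult_left_le)
      also have "\<dots> < d" using va v_sym[of a l] ac l by simp
      finally show ?thesis .
    qed
    then have "v (l * l - u) < d" using v_add[of "(l - a) * (l + a)" "a * a - u"] ve ac l u
      by (simp add: id)
    then show False by (simp add: d_def)
  qed
  then show ?thesis using l by blast
qed

end


context nv begin

lemma val_main:
  assumes v2: "v 2 = 1" and AB: "A \<in> center" "B \<in> center"
    and h: "\<forall>s\<in>center. s * s * A = B \<longrightarrow> A = 0 \<or> B = 0"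
  shows "v (A - B) = max (v A) (v (- B))"
proof -
  have vB: "v (- B) = v B" using v_uminus AB by simp
  have nA: "v A \<ge> 0" "v B \<ge> 0" using v_nn AB by auto
  have ub: "v (A - B) \<le> max (v A) (v B)" using v_diff AB by simp
  show ?thesis
  proof (cases "A = 0 \<or> B = 0")
    case True then show ?thesis using vB nA by (auto simp: v_uminus AB)
  next
    case False
    then have A0: "A \<noteq> 0" and B0: "B \<noteq> 0" by auto
    show ?thesis
    proof (cases "v A = v B")
      case False
      have 1: "v B \<le> max (v A) (v (A - B))" using v_diff[of A "A - B"] AB by simp
      have 2: "v A \<le> max (v (A - B)) (v B)" using v_add[of "A - B" B] AB by simp
      show ?thesis using 1 2 ub False vB by (auto simp: max_def split: if_splits)
    next
      case True
      define u where "u = B * inverse A"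
      have uc: "u \<in> center" using AB by (simp add: u_def)
      have uA: "u * A = B" using A0 by (simp add: u_def mult.assoc)
      have vu: "v u = 1" using True A0 B0 AB v_zero[of A] by (simp add: u_def v_mult v_inv)
      have eq: "A - B = (1 - u) * A" using uA by (simp add: algebra_simps)
      have "v (1 - u) \<le> 1" using v_diff[of 1 u] uc vu by simp
      moreover have "\<not> v (1 - u) < 1"
      proof
        assume "v (1 - u) < 1"
        then have "v (u - 1) < 1" using v_sym[of 1 u] uc by simp
        from hensel[OF v2 uc this] obtain s where "s \<in> center" "s * s = u" by blast
        then have "s * s * A = B" using uA by simp
        then show False using h \<open>s \<in> center\<close> A0 B0 by blast
      qed
      ultimately have "v (1 - u) = 1" by simp
      then have "v (A - B) = v A" using eq v_mult[of "1 - u" A] uc AB by simp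
      then show ?thesis using True vB by simp
    qed
  qed
qed

end


context qsj begin

lemma LjZ: assumes c: "a \<in> center" "b \<in> center" "z \<in> center" "w \<in> center"
  and h: "Lf a b + Lf z w * j = 0" shows "z = 0 \<and> w = 0"
proof -
  have P: "Lf z w * j = - Lf a b" using h by (simp add: eq_neg_iff_add_eq_0 add.commute)
  have "Lf z w * j * mu = mu * (Lf z w * j)" unfolding P using mu_Lf[OF c(1,2)] by simp
  then show ?thesis using anti c(3,4) by blast
qed

lemma no_zero: assumes c: "s \<in> center" "x \<in> center" "y \<in> center" "z \<in> center" "w \<in> center"
  and h: "s * s * Nm x y = c * Nm z w" shows "z = 0 \<and> w = 0"
proof -
  have sx: "s * x \<in> center" "s * y \<in> center" using c by auto
  have "Nm (s * x) (s * y) = s * s * Nm x y" using c by (simp add: Nm_def algebra_simps cc clc)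
  then have "(Lc (s * x) (s * y) - Lf z w * j) * (Lf (s * x) (s * y) + Lf z w * j) = 0"
    using Gnorm[OF sx c(4,5)] h by simp
  then have "Lc (s * x) (s * y) - Lf z w * j = 0 \<or> Lf (s * x) (s * y) + Lf z w * j = 0" by simp
  then show ?thesis
  proof
    assume "Lc (s * x) (s * y) - Lf z w * j = 0"
    then have e: "Lf (s * x + s * y * t) (- (s * y)) - Lf z w * j = 0"
      by (simp only: Lc_Lf)
    have "Lf (- z) (- w) = - Lf z w" by (simp add: Lf_def)
    then have "Lf (s * x + s * y * t) (- (s * y)) + Lf (- z) (- w) * j = 0"
      using e by simp
    from LjZ[OF _ _ _ _ this] c show ?thesis by simp
  next
    assume "Lf (s * x) (s * y) + Lf z w * j = 0"
    from LjZ[OF sx c(4,5) this] show ?thesis .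
  qed
qed

end


theorem mainTheorem7:
  fixes v :: "'d::division_ring \<Rightarrow> real" and K :: "'d set" and \<mu> :: 'd
  assumes F_local: "nonarch_local_field center v"
    and D_quat: "has_dim_over center (UNIV :: 'd set) 4"
    and K_sub: "center \<subseteq> K"
    and K_field: "\<forall>x\<in>K. \<forall>y\<in>K. x + y \<in> K \<and> x * y \<in> K \<and> - x \<in> K \<and> inverse x \<in> K"
    and K_quad: "has_dim_over center K 2"
    and mu: "\<mu> \<in> K" "\<mu> \<notin> center"
    and two: "absD v 2 = 1"
  shows "\<forall>\<gamma> gp gm. gp \<in> Dplus \<mu> \<and> gm \<in> Dminus \<mu> \<and> \<gamma> = gp + gm \<longrightarrow>
           absD v \<gamma> = max (absD v gp) (absD v gm)"
proof (intro allI impI, elim conjE)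
  fix \<gamma> gp gm assume gp: "gp \<in> Dplus \<mu>" and gm: "gm \<in> Dminus \<mu>" and g: "\<gamma> = gp + gm"
  interpret nv v by (rule nv.intro[OF F_local])
  have "v 2 * v 2 = 1" using two v_mult[of 2 2] by (simp add: absD_def nrd_center)
  moreover have "v 2 \<ge> 0" using v_nn[of 2] by simp
  ultimately have v2: "v 2 = 1" using power2_eq_1_iff[of "v 2"] by (simp add: power2_eq_square)
  have two_nz: "(2::'d) \<noteq> 0" using v2 by auto
  obtain t n where tn: "t \<in> center" "n \<in> center" "\<mu> * \<mu> = t * \<mu> - n"
    using mu_quad[OF K_sub K_field K_quad mu] by blast
  interpret qs \<mu> t n using tn mu(2) two_nz by unfold_locales auto
  have "trd \<mu> = t" using nrd_quad(2)[OF mu(2) tn(1,2)] tn(3) by simp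
  then have qc: "qconj \<mu> = mb" by (simp add: qconj_def mb_def)
  obtain j where j: "j \<noteq> 0" "j * \<mu> = mb * j" using j_exists by blast
  have jmb: "j * mb = \<mu> * j"
    using center_comm'[OF tn(1), of j] by (simp add: mb_def right_diff_distrib j(2) left_diff_distrib)
  have "(j * j) * \<mu> = \<mu> * (j * j)"
    by (simp add: mult.assoc j(2)) (simp add: mult.assoc[symmetric] jmb)
  then obtain x0 y0 where xy0: "x0 \<in> center" "y0 \<in> center" "j * j = Lf x0 y0"
    using Dplus_L[OF D_quat j] by blast
  have "j * Lf x0 y0 = Lc x0 y0 * j"
  proof -
    have c1: "j * x0 = x0 * j" "j * y0 = y0 * j" using center_comm' xy0 by auto
    have "j * Lf x0 y0 = j * x0 + (j * y0) * \<mu>" by (simp add: Lf_def distrib_left mult.assoc)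
    also have "\<dots> = x0 * j + y0 * (j * \<mu>)" by (simp add: c1 mult.assoc)
    also have "\<dots> = Lc x0 y0 * j" by (simp add: j(2) Lc_def distrib_right mult.assoc)
    finally show ?thesis .
  qed
  moreover have "j * Lf x0 y0 = Lf x0 y0 * j" unfolding xy0(3)[symmetric] by (simp add: mult.assoc)
  ultimately have "Lc x0 y0 * j = Lf x0 y0 * j" by metis
  then have "Lc x0 y0 = Lf x0 y0" using j(1) by simp
  then have "y0 * (mb - \<mu>) = 0" by (simp add: Lc_def Lf_def right_diff_distrib)
  then have "y0 = 0" using mb_ne by simp
  then have jjc: "j * j \<in> center" using xy0 by (simp add: Lf_def)
  interpret qsj \<mu> t n j "j * j" using j jjc by unfold_locales auto
  have "gp * \<mu> = \<mu> * gp" using gp by (simp add: Dplus_def)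
  then obtain x y where xy: "x \<in> center" "y \<in> center" "gp = Lf x y"
    using Dplus_L[OF D_quat j] by blast
  have gmmu: "gm * \<mu> = mb * gm" using gm qc by (simp add: Dminus_def)
  have ij: "inverse j * \<mu> = mb * inverse j"
  proof -
    have "inverse j * (j * mb) * inverse j = inverse j * (\<mu> * j) * inverse j" by (simp add: jmb)
    then show ?thesis using j(1) by (simp add: mult.assoc[symmetric]) (simp add: mult.assoc)
  qed
  have gmb: "gm * mb = \<mu> * gm"
    using center_comm'[OF tn(1), of gm] by (simp add: mb_def right_diff_distrib gmmu left_diff_distrib)
  have "(gm * inverse j) * \<mu> = \<mu> * (gm * inverse j)"
    by (simp add: mult.assoc ij) (simp add: mult.assoc[symmetric] gmb)
  then obtain z w where zw: "z \<in> center" "w \<in> center" "gm * inverse j = Lf z w"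
    using Dplus_L[OF D_quat j] by blast
  have gmL: "gm = Lf z w * j" using j(1) zw(3)[symmetric] by (simp add: mult.assoc)
  have L00: "Lf 0 0 = 0" by (simp add: Lf_def)
  have a1: "absD v \<gamma> = v (Nm x y - j * j * Nm z w)"
    using nrd_G[OF xy(1,2) zw(1,2)] by (simp add: absD_def g xy(3) gmL)
  have a2: "absD v gp = v (Nm x y)"
    using nrd_G[OF xy(1,2), of 0 0] by (simp add: absD_def xy(3) L00 Nm_def)
  have a3: "absD v gm = v (- (j * j * Nm z w))"
    using nrd_G[OF _ _ zw(1,2), of 0 0] by (simp add: absD_def gmL L00 Nm_def)
  have "v (Nm x y - j * j * Nm z w) = max (v (Nm x y)) (v (- (j * j * Nm z w)))"
  proof (rule val_main[OF v2])
    show "Nm x y \<in> center" "j * j * Nm z w \<in> center" using xy zw jjc by auto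
    show "\<forall>s\<in>center. s * s * Nm x y = j * j * Nm z w \<longrightarrow> Nm x y = 0 \<or> j * j * Nm z w = 0"
    proof (intro ballI impI)
      fix s assume "s \<in> center" "s * s * Nm x y = j * j * Nm z w"
      from no_zero[OF this(1) xy(1,2) zw(1,2) this(2)] show "Nm x y = 0 \<or> j * j * Nm z w = 0"
        by (simp add: Nm_def)
    qed
  qed
  then show "absD v \<gamma> = max (absD v gp) (absD v gm)" using a1 a2 a3 by simp
qed


end
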